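(* Let $G$ be a graph with a tree-representation $\{T(v)\}$ in which every subtree $T(v)$ is a downward path in the host tree. Then any bottom-up enumeration order $v_1,\dots,v_n$ of the vertices is a strong elimination order of $G$.
   Context: Graphs are finite and simple; $N[v]$ denotes the closed neighbourhood of $v$. A host tree $T$ is a rooted tree whose arcs carry positive integer weights; the depth of a node is the sum of arc weights on its path to the root. A subtree is a connected node set of $T$; its root is its node of smallest depth. A downward path is the node set of the path from a node to one of its descendants. A tree-representation of $G$ assigns to each vertex $v$ a subtree $T(v)$ of $T$ such that for distinct $v,w$, $(v,w)$ is an edge iff $T(v)\cap T(w)\neq\emptyset$. A bottom-up enumeration order is an ordering $v_1,\dots,v_n$ of the vertices in which the depths of the roots of $T(v_1),\dots,T(v_n)$ are non-increasing (ties broken arbitrarily). A strong elimination order is an ordering $v_1,\dots,v_n$ of the vertices such that for all $i,j,k,\ell$: if $i<j$, $k<\ell$, $v_k,v_\ell\in N[v_i]$ and $v_k\in N[v_j]$, then $v_\ell\in N[v_j]$. *)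

theory Defs
  imports Main
begin

definition simple_graph :: "'v set \<Rightarrow> ('v \<Rightarrow> 'v \<Rightarrow> bool) \<Rightarrow> bool" where
  "simple_graph V E \<longleftrightarrow> finite V \<and>
     (\<forall>u v. E u v \<longrightarrow> u \<in> V \<and> v \<in> V \<and> u \<noteq> v \<and> E v u)"

definition closed_nbhd :: "'v set \<Rightarrow> ('v \<Rightarrow> 'v \<Rightarrow> bool) \<Rightarrow> 'v \<Rightarrow> 'v set" where
  "closed_nbhd V E v = insert v {u \<in> V. E v u}"

text \<open>Host tree: finite node set N, root r, parent function par (with par r = r
  as a convention); every node reaches the root by following parents.
  Arc from x to par x (x \<noteq> r) has weight w x.\<close>
definition rooted_tree :: "'n set \<Rightarrow> 'n \<Rightarrow> ('n \<Rightarrow> 'n) \<Rightarrow> bool" where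
  "rooted_tree N r par \<longleftrightarrow> finite N \<and> r \<in> N \<and> par r = r \<and>
     (\<forall>x\<in>N. par x \<in> N) \<and> (\<forall>x\<in>N. \<exists>k. (par ^^ k) x = r)"

definition weighted_tree :: "'n set \<Rightarrow> 'n \<Rightarrow> ('n \<Rightarrow> 'n) \<Rightarrow> ('n \<Rightarrow> nat) \<Rightarrow> bool" where
  "weighted_tree N r par w \<longleftrightarrow> rooted_tree N r par \<and> (\<forall>x\<in>N. x \<noteq> r \<longrightarrow> w x > 0)"

definition tree_depth :: "'n \<Rightarrow> ('n \<Rightarrow> 'n) \<Rightarrow> ('n \<Rightarrow> nat) \<Rightarrow> 'n \<Rightarrow> nat" where
  "tree_depth r par w x = (\<Sum>i < (LEAST k. (par ^^ k) x = r). w ((par ^^ i) x))"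

definition tree_adj :: "'n set \<Rightarrow> 'n \<Rightarrow> ('n \<Rightarrow> 'n) \<Rightarrow> 'n \<Rightarrow> 'n \<Rightarrow> bool" where
  "tree_adj N r par x y \<longleftrightarrow> x \<in> N \<and> y \<in> N \<and>
     ((x \<noteq> r \<and> par x = y) \<or> (y \<noteq> r \<and> par y = x))"

definition subtree :: "'n set \<Rightarrow> 'n \<Rightarrow> ('n \<Rightarrow> 'n) \<Rightarrow> 'n set \<Rightarrow> bool" where
  "subtree N r par S \<longleftrightarrow> S \<noteq> {} \<and> S \<subseteq> N \<and>
     (\<forall>x\<in>S. \<forall>y\<in>S. (\<lambda>a b. a \<in> S \<and> b \<in> S \<and> tree_adj N r par a b)\<^sup>*\<^sup>* x y)"

definition subtree_root_depth :: "'n \<Rightarrow> ('n \<Rightarrow> 'n) \<Rightarrow> ('n \<Rightarrow> nat) \<Rightarrow> 'n set \<Rightarrow> nat" where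
  "subtree_root_depth r par w S = Min (tree_depth r par w ` S)"

text \<open>Downward path: node set of the path from a node a to a descendant b
  (b reaches a after k parent steps).\<close>
definition downward_path :: "'n set \<Rightarrow> ('n \<Rightarrow> 'n) \<Rightarrow> 'n set \<Rightarrow> bool" where
  "downward_path N par S \<longleftrightarrow> (\<exists>b\<in>N. \<exists>k::nat. S = {(par ^^ i) b | i. i \<le> k})"

definition tree_representation ::
  "'v set \<Rightarrow> ('v \<Rightarrow> 'v \<Rightarrow> bool) \<Rightarrow> 'n set \<Rightarrow> 'n \<Rightarrow> ('n \<Rightarrow> 'n) \<Rightarrow> ('v \<Rightarrow> 'n set) \<Rightarrow> bool" where
  "tree_representation V E N r par T \<longleftrightarrow>
     (\<forall>v\<in>V. subtree N r par (T v)) \<and>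
     (\<forall>v\<in>V. \<forall>u\<in>V. v \<noteq> u \<longrightarrow> (E v u \<longleftrightarrow> T v \<inter> T u \<noteq> {}))"

definition vertex_ordering :: "'v set \<Rightarrow> 'v list \<Rightarrow> bool" where
  "vertex_ordering V vs \<longleftrightarrow> distinct vs \<and> set vs = V"

definition bottom_up_order ::
  "'n \<Rightarrow> ('n \<Rightarrow> 'n) \<Rightarrow> ('n \<Rightarrow> nat) \<Rightarrow> ('v \<Rightarrow> 'n set) \<Rightarrow> 'v set \<Rightarrow> 'v list \<Rightarrow> bool" where
  "bottom_up_order r par w T V vs \<longleftrightarrow> vertex_ordering V vs \<and>
     (\<forall>i j. i < j \<and> j < length vs \<longrightarrow>
        subtree_root_depth r par w (T (vs ! j)) \<le> subtree_root_depth r par w (T (vs ! i)))"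

definition strong_elimination_order :: "'v set \<Rightarrow> ('v \<Rightarrow> 'v \<Rightarrow> bool) \<Rightarrow> 'v list \<Rightarrow> bool" where
  "strong_elimination_order V E vs \<longleftrightarrow> vertex_ordering V vs \<and>
     (\<forall>i j k l. i < length vs \<and> j < length vs \<and> k < length vs \<and> l < length vs \<and>
        i < j \<and> k < l \<and>
        vs ! k \<in> closed_nbhd V E (vs ! i) \<and> vs ! l \<in> closed_nbhd V E (vs ! i) \<and>
        vs ! k \<in> closed_nbhd V E (vs ! j) \<longrightarrow> vs ! l \<in> closed_nbhd V E (vs ! j))"

end

theory Submission
  imports Defs
begin

locale anc_struct =
  fixes A :: "'n \<Rightarrow> 'n \<Rightarrow> bool" and D :: "'n \<Rightarrow> nat"
  assumes trans: "\<And>x y z. A x y \<Longrightarrow> A y z \<Longrightarrow> A x z"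
    and chain: "\<And>x y z. A x z \<Longrightarrow> A y z \<Longrightarrow> A x y \<or> A y x"
    and strict: "\<And>x y. A x y \<Longrightarrow> x \<noteq> y \<Longrightarrow> D x < D y"
    and refl1: "\<And>x y. A x y \<Longrightarrow> A x x \<and> A y y"
begin

definition I :: "'n \<Rightarrow> 'n \<Rightarrow> 'n set" where
  "I t b = {z. A z b \<and> A t z}"

lemma Imem[simp]: "z \<in> I t b \<longleftrightarrow> A z b \<and> A t z" by (simp add: I_def)

lemma CL: assumes "A x z" "A y z" "D x \<le> D y" shows "A x y"
proof -
  have "A x y \<or> A y x" using chain[OF assms(1,2)] .
  then show ?thesis
  proof
    assume "A y x"
    show ?thesis
    proof (cases "x = y")
      case True then show ?thesis using refl1[OF \<open>A y x\<close>] by simp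
    next
      case False then have "D y < D x" using strict[OF \<open>A y x\<close>] by auto
      then show ?thesis using assms(3) by simp
    qed
  qed
qed

lemma IL: assumes "z \<in> I t1 b1" "z \<in> I t2 b2" "D t2 \<le> D t1" shows "t1 \<in> I t2 b2"
proof -
  have "A t1 z" "A t2 z" "A z b2" using assms by (auto simp: I_def)
  then have "A t2 t1" using CL[of t2 z t1] assms(3) by simp
  then show ?thesis using \<open>A t1 z\<close> \<open>A z b2\<close> trans[of t1 z b2] by simp
qed

lemma IL': assumes "I t1 b1 \<inter> I t2 b2 \<noteq> {}" "D t2 \<le> D t1" shows "t1 \<in> I t2 b2"
  using assms IL by blast

lemma ILc: assumes "I t2 b2 \<inter> I t1 b1 \<noteq> {}" "D t2 \<le> D t1" shows "t1 \<in> I t2 b2"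
  using assms IL by blast

lemma main:
  assumes ik: "I ti bi \<inter> I tk bk \<noteq> {}" and il: "I ti bi \<inter> I tL bL \<noteq> {}"
    and jk: "I tj bj \<inter> I tk bk \<noteq> {}" and dij: "D tj \<le> D ti" and dkl: "D tL \<le> D tk"
  shows "I tj bj \<inter> I tL bL \<noteq> {}"
proof (cases "D ti \<le> D tk")
  case True
  have tki: "tk \<in> I ti bi" using ILc[OF ik] True by simp
  have tkj: "tk \<in> I tj bj" using ILc[OF jk] True dij by simp
  show ?thesis
  proof (cases "D ti \<le> D tL")
    case True
    have tli: "tL \<in> I ti bi" using ILc[OF il] True by simp
    have "A tL tk" using tli tki CL[of tL bi tk] dkl by simp
    moreover have "A tj tk" using tkj by simp
    ultimately have "A tj tL" using CL[of tj tk tL] dij True by simp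
    then have "tL \<in> I tj bj" using \<open>A tL tk\<close> tkj trans[of tL tk bj] by simp
    moreover have "tL \<in> I tL bL"
    proof -
      obtain z where "z \<in> I tL bL" using il by blast
      then show ?thesis using refl1[of tL z] trans[of tL z bL] by simp
    qed
    ultimately show ?thesis by blast
  next
    case False
    have til: "ti \<in> I tL bL" using IL'[OF il] False by simp
    have "A ti tk" "A tj tk" using tki tkj by simp_all
    then have "A tj ti" using CL[of tj tk ti] dij by simp
    then have "ti \<in> I tj bj" using \<open>A ti tk\<close> tkj trans[of ti tk bj] by simp
    then show ?thesis using til by blast
  qed
next
  case False
  have tik: "ti \<in> I tk bk" using IL'[OF ik] False by simp
  have til: "ti \<in> I tL bL" using IL'[OF il] False dkl by simp
  have "A tL ti" "A tk ti" using tik til by simp_all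
  then have ltk: "A tL tk" using CL[of tL ti tk] dkl by simp
  show ?thesis
  proof (cases "D tk \<le> D tj")
    case True
    have tjk: "tj \<in> I tk bk" using IL'[OF jk] True by simp
    have "A tj bk" "A ti bk" using tjk tik by simp_all
    then have "A tj ti" using CL[of tj bk ti] dij by simp
    have "A tk tj" using tjk by simp
    have "tj \<in> I tL bL" using \<open>A tj ti\<close> til ltk \<open>A tk tj\<close> trans[of tj ti bL] trans[of tL tk tj] by simp
    moreover have "tj \<in> I tj bj"
    proof -
      obtain z where "z \<in> I tj bj" using jk by blast
      then show ?thesis using refl1[of tj z] trans[of tj z bj] by simp
    qed
    ultimately show ?thesis by blast
  next
    case False
    have tkj: "tk \<in> I tj bj" using ILc[OF jk] False by simp
    have "tk \<in> I tL bL" using ltk \<open>A tk ti\<close> til trans[of tk ti bL] by simp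
    then show ?thesis using tkj by blast
  qed
qed

end


definition anc :: "'n set \<Rightarrow> ('n \<Rightarrow> 'n) \<Rightarrow> 'n \<Rightarrow> 'n \<Rightarrow> bool" where
  "anc N par x y \<longleftrightarrow> x \<in> N \<and> y \<in> N \<and> (\<exists>n. (par ^^ n) y = x)"

lemma funpow_in: assumes "\<forall>x\<in>N. par x \<in> N" "x \<in> N" shows "(par ^^ n) x \<in> N"
  using assms by (induction n) auto

lemma funpow_Suc_apply: "(f ^^ Suc n) x = (f ^^ n) (f x)"
  by (metis comp_apply funpow_Suc_right)

lemma depth_step:
  assumes wt: "weighted_tree N r par w" and x: "x \<in> N" "x \<noteq> r"
  shows "tree_depth r par w x = w x + tree_depth r par w (par x)"
proof -
  have rt: "rooted_tree N r par" using wt by (simp add: weighted_tree_def)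
  obtain k where k: "(par ^^ k) x = r" using rt x by (auto simp: rooted_tree_def)
  have "k \<noteq> 0" using k x by (metis funpow_0)
  then obtain k' where k': "k = Suc k'" by (cases k) auto
  have ex: "\<exists>k. (par ^^ k) (par x) = r" using k k' funpow_Suc_apply by metis
  define m where "m = (LEAST k. (par ^^ k) (par x) = r)"
  have m: "(par ^^ m) (par x) = r" unfolding m_def using LeastI_ex[OF ex] .
  have L: "(LEAST k. (par ^^ k) x = r) = Suc m"
  proof (rule Least_equality)
    show "(par ^^ Suc m) x = r" using m funpow_Suc_apply by metis
  next
    fix y assume y: "(par ^^ y) x = r"
    have "y \<noteq> 0" using y x by (metis funpow_0)
    then obtain y' where y': "y = Suc y'" by (cases y) auto
    have "(par ^^ y') (par x) = r" using y y' funpow_Suc_apply by metis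
    then have "m \<le> y'" unfolding m_def by (rule Least_le)
    then show "Suc m \<le> y" using y' by simp
  qed
  have "tree_depth r par w x = (\<Sum>i < Suc m. w ((par ^^ i) x))"
    unfolding tree_depth_def L ..
  also have "\<dots> = w x + (\<Sum>i < m. w ((par ^^ Suc i) x))"
    by (subst sum.lessThan_Suc_shift) simp
  also have "\<dots> = w x + tree_depth r par w (par x)"
    unfolding tree_depth_def m_def[symmetric] by (metis (no_types) funpow_Suc_apply)
  finally show ?thesis .
qed

lemma depth_par:
  assumes wt: "weighted_tree N r par w" and x: "x \<in> N"
  shows "tree_depth r par w (par x) \<le> tree_depth r par w x \<and>
    (par x \<noteq> x \<longrightarrow> tree_depth r par w (par x) < tree_depth r par w x)"
proof (cases "x = r")
  case True
  then have "par x = x" using wt by (simp add: weighted_tree_def rooted_tree_def)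
  then show ?thesis by simp
next
  case False
  have "w x > 0" using wt x False by (simp add: weighted_tree_def)
  then show ?thesis using depth_step[OF wt x False] by simp
qed

lemma depth_funpow:
  assumes wt: "weighted_tree N r par w"
  shows "x \<in> N \<Longrightarrow> tree_depth r par w ((par ^^ n) x) \<le> tree_depth r par w x \<and>
    ((par ^^ n) x \<noteq> x \<longrightarrow> tree_depth r par w ((par ^^ n) x) < tree_depth r par w x)"
proof (induction n arbitrary: x)
  case 0
  then show ?case by simp
next
  case (Suc n)
  have pN: "par x \<in> N" using wt Suc.prems by (simp add: weighted_tree_def rooted_tree_def)
  have e: "(par ^^ Suc n) x = (par ^^ n) (par x)" by (rule funpow_Suc_apply)
  show ?case
  proof (cases "par x = x")
    case True
    have "(par ^^ n) x = x" using True by (induction n) auto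
    then show ?thesis using e True by simp
  next
    case False
    have "tree_depth r par w (par x) < tree_depth r par w x" using depth_par[OF wt Suc.prems] False by simp
    then show ?thesis using Suc.IH[OF pN] e by simp
  qed
qed

lemma anc_struct_tree:
  assumes wt: "weighted_tree N r par w"
  shows "anc_struct (anc N par) (tree_depth r par w)"
proof
  fix x y z assume "anc N par x y" "anc N par y z"
  then show "anc N par x z" unfolding anc_def by (metis funpow_add o_apply)
next
  fix x y z assume a: "anc N par x z" "anc N par y z"
  then obtain a b where ab: "(par ^^ a) z = x" "(par ^^ b) z = y" by (auto simp: anc_def)
  show "anc N par x y \<or> anc N par y x"
  proof (cases "a \<le> b")
    case True
    then have "(par ^^ (b - a)) x = y" using ab by (metis funpow_add o_apply le_add_diff_inverse2)
    then show ?thesis using a by (auto simp: anc_def)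
  next
    case False
    then have "(par ^^ (a - b)) y = x" using ab by (metis funpow_add o_apply le_add_diff_inverse2 nat_le_linear)
    then show ?thesis using a by (auto simp: anc_def)
  qed
next
  fix x y assume "anc N par x y" "x \<noteq> y"
  then show "tree_depth r par w x < tree_depth r par w y"
    using depth_funpow[OF wt] by (auto simp: anc_def)
next
  fix x y assume "anc N par x y"
  then show "anc N par x x \<and> anc N par y y" unfolding anc_def by (metis funpow_0)
qed



lemma path_interval:
  assumes wt: "weighted_tree N r par w" and b: "b \<in> N"
  shows "{(par ^^ i) b | i. i \<le> k} = anc_struct.I (anc N par) ((par ^^ k) b) b \<and>
    subtree_root_depth r par w {(par ^^ i) b | i. i \<le> k} = tree_depth r par w ((par ^^ k) b)"
proof -
  interpret X: anc_struct "anc N par" "tree_depth r par w" by (rule anc_struct_tree[OF wt])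
  have parN: "\<forall>x\<in>N. par x \<in> N" using wt by (simp add: weighted_tree_def rooted_tree_def)
  have finN: "finite N" using wt by (simp add: weighted_tree_def rooted_tree_def)
  let ?S = "{(par ^^ i) b | i. i \<le> k}"
  let ?t = "(par ^^ k) b"
  have tN: "?t \<in> N" using funpow_in[OF parN b] .
  have eq: "?S = X.I ?t b"
  proof
    show "?S \<subseteq> X.I ?t b"
    proof
      fix z assume "z \<in> ?S"
      then obtain i where i: "i \<le> k" "z = (par ^^ i) b" by auto
      have zN: "z \<in> N" using i funpow_in[OF parN b] by simp
      have "(par ^^ (k - i)) z = ?t" using i by (metis funpow_add o_apply le_add_diff_inverse2)
      then show "z \<in> X.I ?t b" using i zN b tN by (auto simp: anc_def)
    qed
  next
    show "X.I ?t b \<subseteq> ?S"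
    proof
      fix z assume z: "z \<in> X.I ?t b"
      then obtain m where m: "(par ^^ m) b = z" by (auto simp: anc_def)
      show "z \<in> ?S"
      proof (cases "m \<le> k")
        case True then show ?thesis using m by auto
      next
        case False
        then have "(par ^^ (m - k)) ?t = z" using m by (metis funpow_add o_apply le_add_diff_inverse2 nat_le_linear)
        then have a1: "anc N par z ?t" using z tN by (auto simp: anc_def)
        have a2: "anc N par ?t z" using z by simp
        have "z = ?t" using X.strict[OF a1] X.strict[OF a2] by fastforce
        then show ?thesis by auto
      qed
    qed
  qed
  have "Min (tree_depth r par w ` ?S) = tree_depth r par w ?t"
  proof (rule Min_eqI)
    have "?S \<subseteq> N" using funpow_in[OF parN b] by auto
    then show "finite (tree_depth r par w ` ?S)" using finN finite_subset by blast
  next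
    fix y assume "y \<in> tree_depth r par w ` ?S"
    then obtain z where z: "z \<in> ?S" "y = tree_depth r par w z" by auto
    have "anc N par ?t z" using z eq by simp
    then show "tree_depth r par w ?t \<le> y" using X.strict z by fastforce
  next
    show "tree_depth r par w ?t \<in> tree_depth r par w ` ?S" by auto
  qed
  then show ?thesis using eq by (simp add: subtree_root_depth_def)
qed


theorem corollary1:
  fixes V :: "'v set" and E :: "'v \<Rightarrow> 'v \<Rightarrow> bool"
    and N :: "'n set" and r :: 'n and par :: "'n \<Rightarrow> 'n" and w :: "'n \<Rightarrow> nat"
    and T :: "'v \<Rightarrow> 'n set" and vs :: "'v list"
  assumes "simple_graph V E"
    and "weighted_tree N r par w"
    and "tree_representation V E N r par T"
    and "\<forall>v\<in>V. downward_path N par (T v)"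
    and "bottom_up_order r par w T V vs"
  shows "strong_elimination_order V E vs"
proof -
  note wt = assms(2)
  interpret X: anc_struct "anc N par" "tree_depth r par w" by (rule anc_struct_tree[OF wt])
  have "\<forall>v\<in>V. \<exists>tb. T v = X.I (fst tb) (snd tb) \<and>
      subtree_root_depth r par w (T v) = tree_depth r par w (fst tb)"
  proof
    fix v assume "v \<in> V"
    then obtain b k where b: "b \<in> N" "T v = {(par ^^ i) b | i. i \<le> k}"
      using assms(4) by (auto simp: downward_path_def)
    show "\<exists>tb. T v = X.I (fst tb) (snd tb) \<and>
      subtree_root_depth r par w (T v) = tree_depth r par w (fst tb)"
      using path_interval[OF wt b(1), of k] b(2) by (metis fst_conv snd_conv)
  qed
  then obtain f where f: "\<forall>v\<in>V. T v = X.I (fst (f v)) (snd (f v)) \<and>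
      subtree_root_depth r par w (T v) = tree_depth r par w (fst (f v))"
    by metis
  have nb: "u \<in> closed_nbhd V E v \<longleftrightarrow> T u \<inter> T v \<noteq> {}" if "u \<in> V" "v \<in> V" for u v
  proof (cases "u = v")
    case True
    have "T v \<noteq> {}" using assms(3) that by (auto simp: tree_representation_def subtree_def)
    then show ?thesis using True by (simp add: closed_nbhd_def)
  next
    case False
    have "E v u \<longleftrightarrow> T v \<inter> T u \<noteq> {}" using assms(3) that False by (auto simp: tree_representation_def)
    then show ?thesis using False that by (auto simp: closed_nbhd_def)
  qed
  have vo: "vertex_ordering V vs" using assms(5) by (simp add: bottom_up_order_def)
  show ?thesis
    unfolding strong_elimination_order_def
  proof (intro conjI vo allI impI)
    fix i j k l
    assume h: "i < length vs \<and> j < length vs \<and> k < length vs \<and> l < length vs \<and>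
        i < j \<and> k < l \<and>
        vs ! k \<in> closed_nbhd V E (vs ! i) \<and> vs ! l \<in> closed_nbhd V E (vs ! i) \<and>
        vs ! k \<in> closed_nbhd V E (vs ! j)"
    have inV: "vs ! i \<in> V" "vs ! j \<in> V" "vs ! k \<in> V" "vs ! l \<in> V"
      using h vo by (auto simp: vertex_ordering_def)
    have dij: "subtree_root_depth r par w (T (vs ! j)) \<le> subtree_root_depth r par w (T (vs ! i))"
      and dkl: "subtree_root_depth r par w (T (vs ! l)) \<le> subtree_root_depth r par w (T (vs ! k))"
      using assms(5) h by (auto simp: bottom_up_order_def)
    have ik: "T (vs ! i) \<inter> T (vs ! k) \<noteq> {}" using h nb[OF inV(3,1)] by blast
    have il: "T (vs ! i) \<inter> T (vs ! l) \<noteq> {}" using h nb[OF inV(4,1)] by blast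
    have jk: "T (vs ! j) \<inter> T (vs ! k) \<noteq> {}" using h nb[OF inV(3,2)] by blast
    have Ti: "T (vs ! i) = X.I (fst (f (vs ! i))) (snd (f (vs ! i)))"
      and di: "subtree_root_depth r par w (T (vs ! i)) = tree_depth r par w (fst (f (vs ! i)))"
      using f inV(1) by auto
    have Tj: "T (vs ! j) = X.I (fst (f (vs ! j))) (snd (f (vs ! j)))"
      and dj: "subtree_root_depth r par w (T (vs ! j)) = tree_depth r par w (fst (f (vs ! j)))"
      using f inV(2) by auto
    have Tk: "T (vs ! k) = X.I (fst (f (vs ! k))) (snd (f (vs ! k)))"
      and dk: "subtree_root_depth r par w (T (vs ! k)) = tree_depth r par w (fst (f (vs ! k)))"
      using f inV(3) by auto
    have Tl: "T (vs ! l) = X.I (fst (f (vs ! l))) (snd (f (vs ! l)))"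
      and dl: "subtree_root_depth r par w (T (vs ! l)) = tree_depth r par w (fst (f (vs ! l)))"
      using f inV(4) by auto
    have "T (vs ! j) \<inter> T (vs ! l) \<noteq> {}"
      unfolding Tj Tl
      by (rule X.main[OF ik[unfolded Ti Tk] il[unfolded Ti Tl] jk[unfolded Tj Tk]
          dij[unfolded di dj] dkl[unfolded dk dl]])
    then show "vs ! l \<in> closed_nbhd V E (vs ! j)" using nb[OF inV(4,2)] by blast
  qed
qed

end
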